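(* Let $\varphi$ be a closed block-labelled formula in disjunctive form, and let $f$ be a bijective renaming of propositional variables such that $f(X^k) = [\varphi[X^k]]^k$ for every $X^k \in \mathrm{bv}(\varphi)$. Then for every sub-formula $\psi$ of $\varphi$ and every set $E$ of states of $\mathrm{enc}(\varphi)$ such that $\{\varphi[Y^k] \mid Y^k \in \mathrm{fv}(\psi)\} \subseteq E$ and $E \cap \{\varphi[Y^k] \mid Y^k \in \mathrm{bv}(\psi)\} = \emptyset$, we have $\mathrm{dec}_s(\mathrm{enc}(\varphi), \psi, E) =_f \psi$.
   Context: An LTS is a tuple $(\Sigma, A, \to, s_0)$ with state set $\Sigma$, label set $A$, transition relation $\to\,\subseteq \Sigma\times A\times\Sigma$ (written $s \xrightarrow{a} s'$) and initial state $s_0$. Block-labelled formulas in disjunctive form are generated by $\varphi ::= \mathbf{ff} \mid \varphi_1 \lor \varphi_2 \mid \langle a\rangle\varphi_0 \mid \mu X^k.\varphi_0 \mid \neg\varphi_0 \mid X^k$, where $a$ ranges over action labels, $X$ over propositional variables and $k\in\mathbb{N}$ is a block number attached to every variable occurrence. $\mathrm{fv}(\varphi)$ and $\mathrm{bv}(\varphi)$ denote the free and bound variables; $\varphi$ is closed if $\mathrm{fv}(\varphi)=\emptyset$. All bound variables are assumed to have distinct names, and for $X^k\in\mathrm{bv}(\varphi)$, $\varphi[X^k]$ denotes the unique sub-formula of $\varphi$ of the form $\mu X^k.\varphi_0$. Encoding: $\mathrm{enc}(\varphi)$ is the LTS whose states are the sub-formulas of $\varphi$, with initial state $\varphi$,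 where $\mathbf{ff}$ has no outgoing transitions and the transitions are exactly: $X^k \xrightarrow{\lor} \varphi[X^k]$; $\neg\varphi_0 \xrightarrow{\neg} \varphi_0$; $\langle a\rangle\varphi_0 \xrightarrow{\langle a\rangle}\varphi_0$; $\varphi_1\lor\varphi_2 \xrightarrow{\lor}\varphi_1$ and $\varphi_1\lor\varphi_2\xrightarrow{\lor}\varphi_2$; $\mu X^k.\varphi_0 \xrightarrow{\mu^k}\varphi_0$. (Labels are the symbols $\lor$, $\neg$, $\langle a\rangle$, $\mu^k$.) Decoding: for an LTS $P$ with labels of the forms $\lor,\neg,\langle a\rangle,\mu^k$, a state $s$ and a set $E$ of states, $\mathrm{dec}_s(P,s,E) = \bigvee_{s\xrightarrow{\sigma}s' \in P}\mathrm{dec}_t(P, s\xrightarrow{\sigma}s', E)$ (a disjunction built with binary $\lor$ in some enumeration order of the outgoing transitions; the empty disjunction is $\mathbf{ff}$), where $\mathrm{dec}_t(P,s\xrightarrow{\lor}s',E)=\mathrm{dec}_s(P,s',E)$, $\mathrm{dec}_t(P,s\xrightarrow{\neg}s',E)=\neg\mathrm{dec}_s(P,s',E)$, $\mathrm{dec}_t(P,s\xrightarrow{\langle a\rangle}s',E)=\langle a\rangle\mathrm{dec}_s(P,s',E)$, and $\mathrm{dec}_t(P,s\xrightarrow{\mu^k}s',E)$ equals $[s]^k$ if $s\in E$ and $\mu [s]^k.\mathrm{dec}_s(P,s',E\cup\{s\})$ otherwise. Here $[s]^k$ denotes a propositional variable with block number $k$ uniquely determined by the pair $(s,k)$. Equality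 modulo renaming, commutativity and idempotence: for a bijection $f$ on propositional variables, $=_f$ is the smallest relation on formulas such that whenever $\varphi_i =_f \varphi_i'$ ($i\in\{0,1,2\}$): $\mathbf{ff}=_f\mathbf{ff}$, $\neg\varphi_0=_f\neg\varphi_0'$, $\langle a\rangle\varphi_0=_f\langle a\rangle\varphi_0'$, $\varphi_1\lor\varphi_2=_f\varphi_1'\lor\varphi_2'$, $X=_f f(X)$ and $\mu X.\varphi_0=_f\mu f(X).\varphi_0'$ for every variable $X$; $\varphi_1\lor\varphi_2 =_f \varphi_2'\lor\varphi_1'$; $\varphi_0\lor\varphi_0=_f\varphi_0'$ and $\varphi_0=_f\varphi_0'\lor\varphi_0'$. *)

theory Defs
  imports Main
begin

text \<open>Propositional variables X^k: a name together with a block number.\<close>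
type_synonym 'x pvar = "'x \<times> nat"

datatype ('a, 'x) fm =
    FF
  | Or "('a, 'x) fm" "('a, 'x) fm"
  | Dia 'a "('a, 'x) fm"
  | Mu "'x pvar" "('a, 'x) fm"
  | Neg "('a, 'x) fm"
  | Var "'x pvar"

fun fv :: "('a, 'x) fm \<Rightarrow> 'x pvar set" where
  "fv FF = {}"
| "fv (Or p q) = fv p \<union> fv q"
| "fv (Dia a p) = fv p"
| "fv (Mu X p) = fv p - {X}"
| "fv (Neg p) = fv p"
| "fv (Var X) = {X}"

fun bv :: "('a, 'x) fm \<Rightarrow> 'x pvar set" where
  "bv FF = {}"
| "bv (Or p q) = bv p \<union> bv q"
| "bv (Dia a p) = bv p"
| "bv (Mu X p) = insert X (bv p)"
| "bv (Neg p) = bv p"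
| "bv (Var X) = {}"

fun binders :: "('a, 'x) fm \<Rightarrow> 'x pvar list" where
  "binders FF = []"
| "binders (Or p q) = binders p @ binders q"
| "binders (Dia a p) = binders p"
| "binders (Mu X p) = X # binders p"
| "binders (Neg p) = binders p"
| "binders (Var X) = []"

definition closed :: "('a, 'x) fm \<Rightarrow> bool" where
  "closed p \<longleftrightarrow> fv p = {}"

definition distinct_bv :: "('a, 'x) fm \<Rightarrow> bool" where
  "distinct_bv p \<longleftrightarrow> distinct (binders p)"

fun subs :: "('a, 'x) fm \<Rightarrow> ('a, 'x) fm set" where
  "subs FF = {FF}"
| "subs (Or p q) = insert (Or p q) (subs p \<union> subs q)"
| "subs (Dia a p) = insert (Dia a p) (subs p)"
| "subs (Mu X p) = insert (Mu X p) (subs p)"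
| "subs (Neg p) = insert (Neg p) (subs p)"
| "subs (Var X) = {Var X}"

text \<open>phi[X^k]: the unique sub-formula of phi of the form mu X^k. phi0.\<close>
definition bnd :: "('a, 'x) fm \<Rightarrow> 'x pvar \<Rightarrow> ('a, 'x) fm" where
  "bnd \<phi> X = (THE \<psi>. \<psi> \<in> subs \<phi> \<and> (\<exists>\<psi>0. \<psi> = Mu X \<psi>0))"

datatype 'a lbl = LOr | LNeg | LDia 'a | LMu nat

record ('s, 'a) lts =
  states :: "'s set"
  labels :: "'a lbl set"
  trans  :: "('s \<times> 'a lbl \<times> 's) set"
  init   :: 's

inductive enc_step :: "('a, 'x) fm \<Rightarrow> ('a, 'x) fm \<Rightarrow> 'a lbl \<Rightarrow> ('a, 'x) fm \<Rightarrow> bool"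
  for \<phi> where
  "enc_step \<phi> (Var X) LOr (bnd \<phi> X)"
| "enc_step \<phi> (Neg p) LNeg p"
| "enc_step \<phi> (Dia a p) (LDia a) p"
| "enc_step \<phi> (Or p q) LOr p"
| "enc_step \<phi> (Or p q) LOr q"
| "enc_step \<phi> (Mu (X, k) p) (LMu k) p"

definition enc_trans :: "('a, 'x) fm \<Rightarrow> (('a, 'x) fm \<times> 'a lbl \<times> ('a, 'x) fm) set" where
  "enc_trans \<phi> = {(s, l, t). s \<in> subs \<phi> \<and> enc_step \<phi> s l t}"

definition enc :: "('a, 'x) fm \<Rightarrow> (('a, 'x) fm, 'a) lts" where
  "enc \<phi> = \<lparr> states = subs \<phi>,
             labels = {l. \<exists>s t. (s, l, t) \<in> enc_trans \<phi>},
             trans = enc_trans \<phi>,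
             init = \<phi> \<rparr>"

fun bigor :: "('a, 'x) fm list \<Rightarrow> ('a, 'x) fm" where
  "bigor [] = FF"
| "bigor [p] = p"
| "bigor (p # ps) = Or p (bigor ps)"

text \<open>Decoding, as a relation: dec_s P br s E \<psi> says that \<psi> is the
  result of dec_s(P,s,E) for some enumeration order of the outgoing transitions
  (and the recursion terminates). br s k is the variable [s]^k.\<close>
inductive dec_s :: "('s, 'a) lts \<Rightarrow> ('s \<Rightarrow> nat \<Rightarrow> 'x pvar) \<Rightarrow> 's \<Rightarrow> 's set
                     \<Rightarrow> ('a, 'x) fm \<Rightarrow> bool"
  and dec_t :: "('s, 'a) lts \<Rightarrow> ('s \<Rightarrow> nat \<Rightarrow> 'x pvar) \<Rightarrow> ('s \<times> 'a lbl \<times> 's) \<Rightarrow> 's set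
                     \<Rightarrow> ('a, 'x) fm \<Rightarrow> bool"
  for P br where
  dec_s_intro: "\<lbrakk> distinct ts; set ts = {t \<in> trans P. fst t = s};
                  list_all2 (\<lambda>t \<psi>. dec_t P br t E \<psi>) ts \<psi>s \<rbrakk>
                \<Longrightarrow> dec_s P br s E (bigor \<psi>s)"
| dec_t_or: "dec_s P br s' E \<psi> \<Longrightarrow> dec_t P br (s, LOr, s') E \<psi>"
| dec_t_neg: "dec_s P br s' E \<psi> \<Longrightarrow> dec_t P br (s, LNeg, s') E (Neg \<psi>)"
| dec_t_dia: "dec_s P br s' E \<psi> \<Longrightarrow> dec_t P br (s, LDia a, s') E (Dia a \<psi>)"
| dec_t_mu_in: "s \<in> E \<Longrightarrow> dec_t P br (s, LMu k, s') E (Var (br s k))"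
| dec_t_mu_out: "\<lbrakk> s \<notin> E; dec_s P br s' (insert s E) \<psi> \<rbrakk>
                \<Longrightarrow> dec_t P br (s, LMu k, s') E (Mu (br s k) \<psi>)"

inductive eqf :: "('x pvar \<Rightarrow> 'x pvar) \<Rightarrow> ('a, 'x) fm \<Rightarrow> ('a, 'x) fm \<Rightarrow> bool"
  for f where
  "eqf f FF FF"
| "eqf f p p' \<Longrightarrow> eqf f (Neg p) (Neg p')"
| "eqf f p p' \<Longrightarrow> eqf f (Dia a p) (Dia a p')"
| "eqf f p1 p1' \<Longrightarrow> eqf f p2 p2' \<Longrightarrow> eqf f (Or p1 p2) (Or p1' p2')"
| "eqf f (Var X) (Var (f X))"
| "eqf f p p' \<Longrightarrow> eqf f (Mu X p) (Mu (f X) p')"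
| "eqf f p1 p1' \<Longrightarrow> eqf f p2 p2' \<Longrightarrow> eqf f (Or p1 p2) (Or p2' p1')"
| "eqf f p p' \<Longrightarrow> eqf f (Or p p) p'"
| "eqf f p p' \<Longrightarrow> eqf f p (Or p' p')"

end

theory Submission imports Defs begin

lemma subs_self: "p \<in> subs p" by (cases p) auto
lemma subs_trans: "q \<in> subs p \<Longrightarrow> r \<in> subs q \<Longrightarrow> r \<in> subs p"
  by (induction p) auto
lemma bv_binders: "bv p = set (binders p)" by (induction p) auto
lemma fv_subs: "q \<in> subs p \<Longrightarrow> fv q \<subseteq> fv p \<union> bv p"
  by (induction p) auto
lemma bv_subs: "q \<in> subs p \<Longrightarrow> bv q \<subseteq> bv p"
  by (induction p) auto
lemma distinct_subs: "q \<in> subs p \<Longrightarrow> distinct (binders p) \<Longrightarrow> distinct (binders q)"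
  by (induction p) auto
lemma mu_binders: "Mu X r \<in> subs p \<Longrightarrow> X \<in> set (binders p)"
  by (induction p) auto
lemma mu_uniq: "distinct (binders p) \<Longrightarrow> Mu X r \<in> subs p \<Longrightarrow> Mu X r' \<in> subs p \<Longrightarrow> r = r'"
proof (induction p)
  case (Or p q) then show ?case using mu_binders by fastforce
next
  case (Mu Y s) then show ?case using mu_binders by fastforce
qed auto
lemma mu_ex: "X \<in> bv p \<Longrightarrow> \<exists>r. Mu X r \<in> subs p"
  by (induction p) auto
lemma bnd_eq: "distinct (binders p) \<Longrightarrow> Mu X r \<in> subs p \<Longrightarrow> bnd p X = Mu X r"
  unfolding bnd_def by (rule the_equality) (auto dest: mu_uniq)

lemma out_enc: "s \<in> subs \<phi> \<Longrightarrow> {t \<in> trans (enc \<phi>). fst t = s} = {(s',l,t). s' = s \<and> enc_step \<phi> s l t}"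
  by (auto simp: enc_def enc_trans_def)

inductive_cases dsE: "dec_s P br s E \<psi>"
inductive_cases dtOr: "dec_t P br (s, LOr, s') E \<psi>"
inductive_cases dtNeg: "dec_t P br (s, LNeg, s') E \<psi>"
inductive_cases dtDia: "dec_t P br (s, LDia a, s') E \<psi>"
inductive_cases dtMu: "dec_t P br (s, LMu k, s') E \<psi>"

lemma single: "{t \<in> trans P. fst t = s} = {t0} \<Longrightarrow> dec_s P br s E \<psi> \<longleftrightarrow> dec_t P br t0 E \<psi>"
proof
  assume h: "{t \<in> trans P. fst t = s} = {t0}" "dec_s P br s E \<psi>"
  from h(2) obtain ts \<psi>s where 1: "distinct ts" "set ts = {t \<in> trans P. fst t = s}"
     "list_all2 (\<lambda>t \<psi>. dec_t P br t E \<psi>) ts \<psi>s" "\<psi> = bigor \<psi>s"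
    by (cases rule: dsE) auto
  show "dec_t P br t0 E \<psi>"
  proof -
    have "length ts = 1" using 1 h(1) distinct_card by fastforce
    then obtain x where "ts = [x]" by (metis One_nat_def length_0_conv length_Suc_conv)
    then have "ts = [t0]" using 1 h(1) by auto
    then show ?thesis using 1 by (auto simp: list_all2_Cons1)
  qed
next
  assume h: "{t \<in> trans P. fst t = s} = {t0}" "dec_t P br t0 E \<psi>"
  have "dec_s P br s E (bigor [\<psi>])"
    by (rule dec_s_intro[of "[t0]"]) (use h in auto)
  then show "dec_s P br s E \<psi>" by simp
qed

lemma empty: "{t \<in> trans P. fst t = s} = {} \<Longrightarrow> dec_s P br s E \<psi> \<longleftrightarrow> \<psi> = FF"
proof
  assume h: "{t \<in> trans P. fst t = s} = {}" "dec_s P br s E \<psi>"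
  from h(2) obtain ts \<psi>s where 1: "distinct ts" "set ts = {t \<in> trans P. fst t = s}"
     "list_all2 (\<lambda>t \<psi>. dec_t P br t E \<psi>) ts \<psi>s" "\<psi> = bigor \<psi>s"
    by (cases rule: dsE) auto
  have "ts = []" using 1(2) h(1) by simp
  then have "\<psi>s = []" using 1(3) by simp
  then show "\<psi> = FF" using 1(4) by simp
next
  assume h: "{t \<in> trans P. fst t = s} = {}" "\<psi> = FF"
  have "dec_s P br s E (bigor [])"
    by (rule dec_s_intro[of "[]"]) (use h in simp_all)
  then show "dec_s P br s E \<psi>" using h by simp
qed

lemma two_dec: "{t \<in> trans P. fst t = s} = {t1,t2} \<Longrightarrow> t1 \<noteq> t2 \<Longrightarrow> dec_s P br s E \<psi> \<Longrightarrow>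
   \<exists>a b. dec_t P br t1 E a \<and> dec_t P br t2 E b \<and> (\<psi> = Or a b \<or> \<psi> = Or b a)"
proof -
  assume h: "{t \<in> trans P. fst t = s} = {t1,t2}" "t1 \<noteq> t2" "dec_s P br s E \<psi>"
  from h(3) obtain ts \<psi>s where 1: "distinct ts" "set ts = {t \<in> trans P. fst t = s}"
     "list_all2 (\<lambda>t \<psi>. dec_t P br t E \<psi>) ts \<psi>s" "\<psi> = bigor \<psi>s"
    by (cases rule: dsE) auto
  have st: "set ts = {t1,t2}" using 1(2) h(1) by simp
  have "length ts = 2" using distinct_card[OF 1(1)] st h(2) by simp
  then obtain x y where xy: "ts = [x,y]"
    by (auto simp: length_Suc_conv numeral_2_eq_2)
  have "{x,y} = {t1,t2}" using st xy by simp
  then have "ts = [t1,t2] \<or> ts = [t2,t1]" using xy 1(1) by (auto simp: doubleton_eq_iff)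
  then show ?thesis
  proof
    assume "ts = [t1,t2]"
    then obtain a b where "\<psi>s = [a,b]" "dec_t P br t1 E a" "dec_t P br t2 E b"
      using 1(3) by (auto simp: list_all2_Cons1)
    then show ?thesis using 1(4) by auto
  next
    assume "ts = [t2,t1]"
    then obtain a b where "\<psi>s = [b,a]" "dec_t P br t1 E a" "dec_t P br t2 E b"
      using 1(3) by (auto simp: list_all2_Cons1)
    then show ?thesis using 1(4) by auto
  qed
qed

lemma two_ex: "{t \<in> trans P. fst t = s} = {t1,t2} \<Longrightarrow> t1 \<noteq> t2 \<Longrightarrow> dec_t P br t1 E a \<Longrightarrow> dec_t P br t2 E b \<Longrightarrow>
   dec_s P br s E (Or a b)"
proof -
  assume h: "{t \<in> trans P. fst t = s} = {t1,t2}" "t1 \<noteq> t2" "dec_t P br t1 E a" "dec_t P br t2 E b"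
  have "dec_s P br s E (bigor [a,b])"
    by (rule dec_s_intro[of "[t1,t2]"]) (use h in simp_all)
  then show ?thesis by simp
qed

lemma outFF: "FF \<in> subs \<phi> \<Longrightarrow> {t \<in> trans (enc \<phi>). fst t = FF} = {}"
  using out_enc[of FF \<phi>] by (auto simp: enc_step.simps)
lemma outOr: "Or p q \<in> subs \<phi> \<Longrightarrow> {t \<in> trans (enc \<phi>). fst t = Or p q} = {(Or p q, LOr, p), (Or p q, LOr, q)}"
  using out_enc[of "Or p q" \<phi>] by (auto simp: enc_step.simps)
lemma outDia: "Dia a p \<in> subs \<phi> \<Longrightarrow> {t \<in> trans (enc \<phi>). fst t = Dia a p} = {(Dia a p, LDia a, p)}"
  using out_enc[of "Dia a p" \<phi>] by (auto simp: enc_step.simps)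
lemma outNeg: "Neg p \<in> subs \<phi> \<Longrightarrow> {t \<in> trans (enc \<phi>). fst t = Neg p} = {(Neg p, LNeg, p)}"
  using out_enc[of "Neg p" \<phi>] by (auto simp: enc_step.simps)
lemma outMu: "Mu (x,k) p \<in> subs \<phi> \<Longrightarrow> {t \<in> trans (enc \<phi>). fst t = Mu (x,k) p} = {(Mu (x,k) p, LMu k, p)}"
  using out_enc[of "Mu (x,k) p" \<phi>] by (auto simp: enc_step.simps)
lemma outVar: "Var X \<in> subs \<phi> \<Longrightarrow> {t \<in> trans (enc \<phi>). fst t = Var X} = {(Var X, LOr, bnd \<phi> X)}"
  using out_enc[of "Var X" \<phi>] by (auto simp: enc_step.simps)

lemma dt_or_iff: "dec_t P br (s, LOr, s') E \<psi> \<longleftrightarrow> dec_s P br s' E \<psi>"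
  by (auto elim: dtOr intro: dec_t_or)

theorem lemma1:
  fixes \<phi> :: "('a, 'x) fm"
    and f :: "'x pvar \<Rightarrow> 'x pvar"
    and br :: "('a, 'x) fm \<Rightarrow> nat \<Rightarrow> 'x pvar"
  assumes br_inj: "inj (\<lambda>(s, k). br s k)"
    and br_block: "\<And>s k. snd (br s k) = k"
    and closed: "closed \<phi>"
    and distinct: "distinct_bv \<phi>"
    and f_bij: "bij f"
    and f_bv: "\<And>X. X \<in> bv \<phi> \<Longrightarrow> f X = br (bnd \<phi> X) (snd X)"
  shows "\<forall>\<psi> \<in> subs \<phi>. \<forall>E. E \<subseteq> states (enc \<phi>)
           \<longrightarrow> bnd \<phi> ` fv \<psi> \<subseteq> E
           \<longrightarrow> E \<inter> bnd \<phi> ` bv \<psi> = {}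
           \<longrightarrow> (\<exists>\<psi>'. dec_s (enc \<phi>) br \<psi> E \<psi>')
               \<and> (\<forall>\<psi>'. dec_s (enc \<phi>) br \<psi> E \<psi>' \<longrightarrow> eqf f \<psi> \<psi>')"
proof -
  have dist: "distinct (binders \<phi>)" using distinct by (simp add: distinct_bv_def)
  have fv0: "fv \<phi> = {}" using closed by (simp add: closed_def)
  have main: "\<forall>E. bnd \<phi> ` fv \<psi> \<subseteq> E \<longrightarrow> E \<inter> bnd \<phi> ` bv \<psi> = {}
           \<longrightarrow> (\<exists>\<psi>'. dec_s (enc \<phi>) br \<psi> E \<psi>')
               \<and> (\<forall>\<psi>'. dec_s (enc \<phi>) br \<psi> E \<psi>' \<longrightarrow> eqf f \<psi> \<psi>')"
    if "\<psi> \<in> subs \<phi>" for \<psi>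
    using that
  proof (induction \<psi>)
    case FF
    show ?case using empty[OF outFF[OF FF]] by (auto intro: eqf.intros)
  next
    case (Or p q)
    have ps: "p \<in> subs \<phi>" "q \<in> subs \<phi>" by (auto intro!: subs_trans[OF Or.prems] simp: subs_self)
    show ?case
    proof (intro allI impI)
      fix E assume E1: "bnd \<phi> ` fv (Or p q) \<subseteq> E" and E2: "E \<inter> bnd \<phi> ` bv (Or p q) = {}"
      have IHp: "(\<exists>\<psi>'. dec_s (enc \<phi>) br p E \<psi>') \<and> (\<forall>\<psi>'. dec_s (enc \<phi>) br p E \<psi>' \<longrightarrow> eqf f p \<psi>')"
      proof -
        have "bnd \<phi> ` fv p \<subseteq> E" "E \<inter> bnd \<phi> ` bv p = {}" using E1 E2 by auto
        then show ?thesis using Or.IH(1)[OF ps(1)] by blast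
      qed
      have IHq: "(\<exists>\<psi>'. dec_s (enc \<phi>) br q E \<psi>') \<and> (\<forall>\<psi>'. dec_s (enc \<phi>) br q E \<psi>' \<longrightarrow> eqf f q \<psi>')"
      proof -
        have "bnd \<phi> ` fv q \<subseteq> E" "E \<inter> bnd \<phi> ` bv q = {}" using E1 E2 by auto
        then show ?thesis using Or.IH(2)[OF ps(2)] by blast
      qed
      show "(\<exists>\<psi>'. dec_s (enc \<phi>) br (Or p q) E \<psi>') \<and> (\<forall>\<psi>'. dec_s (enc \<phi>) br (Or p q) E \<psi>' \<longrightarrow> eqf f (Or p q) \<psi>')"
      proof (cases "p = q")
        case True
        have o: "{t \<in> trans (enc \<phi>). fst t = Or p q} = {(Or p q, LOr, p)}"
          using outOr[OF Or.prems] True by simp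
        have eq: "dec_s (enc \<phi>) br (Or p q) E \<psi>' \<longleftrightarrow> dec_s (enc \<phi>) br p E \<psi>'" for \<psi>'
          unfolding single[OF o] by (auto elim: dtOr intro: dec_t_or)
        show ?thesis unfolding eq using IHp True by (auto intro: eqf.intros)
      next
        case False
        have o: "{t \<in> trans (enc \<phi>). fst t = Or p q} = {(Or p q, LOr, p), (Or p q, LOr, q)}"
          using outOr[OF Or.prems] by simp
        have ne: "(Or p q, LOr, p) \<noteq> (Or p q, LOr, q)" using False by simp
        show ?thesis
        proof
          obtain a b where "dec_s (enc \<phi>) br p E a" "dec_s (enc \<phi>) br q E b" using IHp IHq by blast
          then show "\<exists>\<psi>'. dec_s (enc \<phi>) br (Or p q) E \<psi>'"
            using two_ex[OF o ne dec_t_or dec_t_or] by blast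
        next
          show "\<forall>\<psi>'. dec_s (enc \<phi>) br (Or p q) E \<psi>' \<longrightarrow> eqf f (Or p q) \<psi>'"
          proof (intro allI impI)
            fix \<psi>' assume "dec_s (enc \<phi>) br (Or p q) E \<psi>'"
            from two_dec[OF o ne this] obtain a b where ab: "dec_s (enc \<phi>) br p E a"
              "dec_s (enc \<phi>) br q E b" "\<psi>' = Or a b \<or> \<psi>' = Or b a"
              by (auto elim: dtOr)
            then have "eqf f p a" "eqf f q b" using IHp IHq by auto
            then show "eqf f (Or p q) \<psi>'" using ab(3) by (auto intro: eqf.intros)
          qed
        qed
      qed
    qed
  next
    case (Dia a p)
    have ps: "p \<in> subs \<phi>" by (auto intro!: subs_trans[OF Dia.prems] simp: subs_self)
    have eq: "dec_s (enc \<phi>) br (Dia a p) E \<psi>' \<longleftrightarrow> (\<exists>\<psi>0. \<psi>' = Dia a \<psi>0 \<and> dec_s (enc \<phi>) br p E \<psi>0)" for E \<psi>'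
      unfolding single[OF outDia[OF Dia.prems]] by (auto elim: dtDia intro: dec_t_dia)
    show ?case unfolding eq using Dia.IH[OF ps] by (auto intro: eqf.intros)
  next
    case (Neg p)
    have ps: "p \<in> subs \<phi>" by (auto intro!: subs_trans[OF Neg.prems] simp: subs_self)
    have eq: "dec_s (enc \<phi>) br (Neg p) E \<psi>' \<longleftrightarrow> (\<exists>\<psi>0. \<psi>' = Neg \<psi>0 \<and> dec_s (enc \<phi>) br p E \<psi>0)" for E \<psi>'
      unfolding single[OF outNeg[OF Neg.prems]] by (auto elim: dtNeg intro: dec_t_neg)
    show ?case unfolding eq using Neg.IH[OF ps] by (auto intro: eqf.intros)
  next
    case (Mu X p)
    obtain x k where X: "X = (x,k)" by (cases X)
    have ps: "p \<in> subs \<phi>" by (auto intro!: subs_trans[OF Mu.prems] simp: subs_self)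
    have bX: "bnd \<phi> X = Mu X p" using bnd_eq[OF dist Mu.prems] .
    have Xbv: "X \<in> bv \<phi>" using bv_subs[OF Mu.prems] by auto
    have fX: "f X = br (Mu X p) k" using f_bv[OF Xbv] bX X by simp
    have dMu: "distinct (binders (Mu X p))" using distinct_subs[OF Mu.prems dist] .
    have Xnp: "X \<notin> bv p" using dMu by (simp add: bv_binders)
    show ?case
    proof (intro allI impI)
      fix E assume E1: "bnd \<phi> ` fv (Mu X p) \<subseteq> E" and E2: "E \<inter> bnd \<phi> ` bv (Mu X p) = {}"
      have nE: "Mu X p \<notin> E" using E2 bX by auto
      have F1: "bnd \<phi> ` fv p \<subseteq> insert (Mu X p) E" using E1 bX by auto
      have F2: "insert (Mu X p) E \<inter> bnd \<phi> ` bv p = {}"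
      proof -
        have "Mu X p \<notin> bnd \<phi> ` bv p"
        proof
          assume "Mu X p \<in> bnd \<phi> ` bv p"
          then obtain Y where Y: "Y \<in> bv p" "Mu X p = bnd \<phi> Y" by auto
          have "Y \<in> bv \<phi>" using Y(1) bv_subs[OF ps] by auto
          then obtain r where r: "Mu Y r \<in> subs \<phi>" using mu_ex by blast
          have "bnd \<phi> Y = Mu Y r" using bnd_eq[OF dist r] .
          then have "Y = X" using Y by simp
          then show False using Y(1) Xnp by simp
        qed
        then show ?thesis using E2 by auto
      qed
      have IH: "(\<exists>\<psi>'. dec_s (enc \<phi>) br p (insert (Mu X p) E) \<psi>') \<and>
         (\<forall>\<psi>'. dec_s (enc \<phi>) br p (insert (Mu X p) E) \<psi>' \<longrightarrow> eqf f p \<psi>')"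
        using Mu.IH[OF ps] F1 F2 by blast
      have eq: "dec_s (enc \<phi>) br (Mu X p) E \<psi>' \<longleftrightarrow> (\<exists>\<psi>0. \<psi>' = Mu (br (Mu X p) k) \<psi>0 \<and> dec_s (enc \<phi>) br p (insert (Mu X p) E) \<psi>0)" for \<psi>'
      proof -
        have sg: "dec_s (enc \<phi>) br (Mu X p) E \<psi>' \<longleftrightarrow> dec_t (enc \<phi>) br (Mu X p, LMu k, p) E \<psi>'"
          using single[OF outMu[OF Mu.prems[unfolded X]]] X by simp
        show ?thesis unfolding sg
        proof
          assume "dec_t (enc \<phi>) br (Mu X p, LMu k, p) E \<psi>'"
          then show "\<exists>\<psi>0. \<psi>' = Mu (br (Mu X p) k) \<psi>0 \<and> dec_s (enc \<phi>) br p (insert (Mu X p) E) \<psi>0"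
            by (rule dtMu) (use nE in auto)
        qed (auto intro: dec_t_mu_out simp: nE)
      qed
      show "(\<exists>\<psi>'. dec_s (enc \<phi>) br (Mu X p) E \<psi>') \<and> (\<forall>\<psi>'. dec_s (enc \<phi>) br (Mu X p) E \<psi>' \<longrightarrow> eqf f (Mu X p) \<psi>')"
        unfolding eq using IH fX by (metis eqf.intros(6))
    qed
  next
    case (Var X)
    have "X \<in> bv \<phi>" using fv_subs[OF Var.prems] fv0 by auto
    then obtain r where r: "Mu X r \<in> subs \<phi>" using mu_ex by blast
    obtain x k where X: "X = (x,k)" by (cases X)
    have bX: "bnd \<phi> X = Mu X r" using bnd_eq[OF dist r] .
    have fX: "f X = br (Mu X r) k" using f_bv[OF \<open>X \<in> bv \<phi>\<close>] bX X by simp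
    show ?case
    proof (intro allI impI)
      fix E assume E1: "bnd \<phi> ` fv (Var X) \<subseteq> E" and E2: "E \<inter> bnd \<phi> ` bv (Var X) = {}"
      have inE: "Mu X r \<in> E" using E1 bX by simp
      have eq2: "dec_s (enc \<phi>) br (Mu X r) E \<psi>' \<longleftrightarrow> \<psi>' = Var (br (Mu X r) k)" for \<psi>'
        using single[OF outMu[OF r[unfolded X]]] inE X
        by (auto elim: dtMu intro: dec_t_mu_in)
      have eq: "dec_s (enc \<phi>) br (Var X) E \<psi>' \<longleftrightarrow> \<psi>' = Var (br (Mu X r) k)" for \<psi>'
        by (simp only: single[OF outVar[OF Var.prems]] bX dt_or_iff eq2)
      show "(\<exists>\<psi>'. dec_s (enc \<phi>) br (Var X) E \<psi>') \<and> (\<forall>\<psi>'. dec_s (enc \<phi>) br (Var X) E \<psi>' \<longrightarrow> eqf f (Var X) \<psi>')"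
        unfolding eq using fX by (metis eqf.intros(5))
    qed
  qed
  show ?thesis using main by blast
qed
end
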